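(* Let $\mathcal{G}=(\mathcal{V},\mathcal{E})$ be an undirected weighted graph with nodes $\mathcal{V}=\{1,\ldots,n\}$, where each edge $\{i,i'\}\in\mathcal{E}$ ($i\neq i'$) carries a weight $A_{i,i'}=A_{i',i}>0$. For each node $i\in\mathcal{V}$ let $L_i:\mathbb{R}^d\to[0,\infty)$ be a non-negative local loss function. Let $\alpha>0$, and let $\{\widehat{\mathbf{w}}^{(i)}\}_{i=1}^n$, with $\widehat{\mathbf{w}}^{(i)}\in\mathbb{R}^d$, be any solution of the GTVMin problem $$\{\widehat{\mathbf{w}}^{(i)}\}_{i=1}^n\in\operatorname*{argmin}_{\mathbf{w}^{(1)},\ldots,\mathbf{w}^{(n)}\in\mathbb{R}^d}\Big[\sum_{i\in\mathcal{V}}L_i(\mathbf{w}^{(i)})+\alpha\sum_{\{i,i'\}\in\mathcal{E}}A_{i,i'}\|\mathbf{w}^{(i)}-\mathbf{w}^{(i')}\|_2^2\Big].$$ Let $\mathcal{C}\subseteq\mathcal{V}$ be a nonempty set of nodes (a cluster) for which there exist a vector $\overline{\mathbf{w}}^{(\mathcal{C})}\in\mathbb{R}^d$ and a number $\varepsilon^{(\mathcal{C})}\ge 0$ with $$\sum_{i\in\mathcal{C}}L_i\big(\overline{\mathbf{w}}^{(\mathcal{C})}\big)\le\varepsilon^{(\mathcal{C})}.$$ Assume $\lambda_2(\mathcal{C})>0$, where $\lambda_2(\mathcal{C})$ is the second smallest eigenvalue of the Laplacian matrix $\mathbf{L}^{(\mathcal{C})}$ of the induced subgraph $\mathcal{G}^{(\mathcal{C})}$.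 Let $R\ge 0$ satisfy $\max_{i\in\mathcal{V}\setminus\mathcal{C}}\|\widehat{\mathbf{w}}^{(i)}\|_2\le R$ (any $R\ge0$ if $\mathcal{C}=\mathcal{V}$). Define, for $i\in\mathcal{C}$, $\widetilde{\mathbf{w}}^{(i)}:=\widehat{\mathbf{w}}^{(i)}-\frac{1}{|\mathcal{C}|}\sum_{i'\in\mathcal{C}}\widehat{\mathbf{w}}^{(i')}$. Then $$\sum_{i\in\mathcal{C}}\|\widetilde{\mathbf{w}}^{(i)}\|_2^2\le\frac{1}{\alpha\,\lambda_2(\mathcal{C})}\Big[\varepsilon^{(\mathcal{C})}+2\alpha\,|\partial\mathcal{C}|\big(\|\overline{\mathbf{w}}^{(\mathcal{C})}\|_2^2+R^2\big)\Big],$$ where $|\partial\mathcal{C}|:=\sum_{\{i,i'\}\in\partial\mathcal{C}}A_{i,i'}$ with $\partial\mathcal{C}:=\{\{i,i'\}\in\mathcal{E}: i\in\mathcal{C},\ i'\notin\mathcal{C}\}$.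
   Context: The induced subgraph $\mathcal{G}^{(\mathcal{C})}$ has node set $\mathcal{C}$ and all edges $\{i,i'\}\in\mathcal{E}$ with $i,i'\in\mathcal{C}$, with the same weights. Its Laplacian is $\mathbf{L}^{(\mathcal{C})}=\mathbf{D}-\mathbf{A}$, where $\mathbf{A}$ is the weighted adjacency matrix of $\mathcal{G}^{(\mathcal{C})}$ (entry $A_{i,i'}$ for edges, $0$ otherwise) and $\mathbf{D}$ is the diagonal matrix of weighted degrees $\sum_{i'\in\mathcal{C}}A_{i,i'}$. The quantity $|\partial\mathcal{C}|$ is called the cluster boundary (total weight of edges leaving $\mathcal{C}$); when $\mathcal{C}=\mathcal{V}$ it equals $0$. *)

theory Defs
  imports "HOL-Analysis.Analysis" "Jordan_Normal_Form.Char_Poly"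
begin

definition wgraph :: "nat \<Rightarrow> (nat \<Rightarrow> nat \<Rightarrow> real) \<Rightarrow> bool" where
  "wgraph n A \<longleftrightarrow> (\<forall>i j. A i j = A j i) \<and> (\<forall>i j. A i j \<ge> 0) \<and> (\<forall>i. A i i = 0)
     \<and> (\<forall>i j. A i j \<noteq> 0 \<longrightarrow> i \<in> {1..n} \<and> j \<in> {1..n})"

text \<open>Edge set: unordered pairs, each listed once as (i,j) with i < j.\<close>
definition edges :: "nat \<Rightarrow> (nat \<Rightarrow> nat \<Rightarrow> real) \<Rightarrow> (nat \<times> nat) set" where
  "edges n A = {(i,j). i \<in> {1..n} \<and> j \<in> {1..n} \<and> i < j \<and> A i j > 0}"

definition gtv_obj :: "nat \<Rightarrow> (nat \<Rightarrow> nat \<Rightarrow> real) \<Rightarrow> (nat \<Rightarrow> real^'d \<Rightarrow> real) \<Rightarrow> real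
    \<Rightarrow> (nat \<Rightarrow> real^'d) \<Rightarrow> real" where
  "gtv_obj n A L \<alpha> w = (\<Sum>i\<in>{1..n}. L i (w i))
      + \<alpha> * (\<Sum>(i,j)\<in>edges n A. A i j * (norm (w i - w j))\<^sup>2)"

definition is_gtvmin_solution :: "nat \<Rightarrow> (nat \<Rightarrow> nat \<Rightarrow> real) \<Rightarrow> (nat \<Rightarrow> real^'d \<Rightarrow> real) \<Rightarrow> real
    \<Rightarrow> (nat \<Rightarrow> real^'d) \<Rightarrow> bool" where
  "is_gtvmin_solution n A L \<alpha> w \<longleftrightarrow>
     (\<forall>w'. gtv_obj n A L \<alpha> w \<le> gtv_obj n A L \<alpha> w')"

text \<open>Laplacian of the induced subgraph on C, rows/columns indexed by the
  elements of C in increasing order.\<close>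
definition laplacian :: "(nat \<Rightarrow> nat \<Rightarrow> real) \<Rightarrow> nat set \<Rightarrow> real mat" where
  "laplacian A C = (let e = sorted_list_of_set C in
     Matrix.mat (card C) (card C) (\<lambda>(a,b). if a = b then (\<Sum>j\<in>C. A (e!a) j) else - A (e!a) (e!b)))"

text \<open>Eigenvalues with algebraic multiplicity, in increasing order (the
  Laplacian is real symmetric, so all eigenvalues are real roots of the
  characteristic polynomial).\<close>
definition sorted_eigenvalues :: "real mat \<Rightarrow> real list" where
  "sorted_eigenvalues M = sorted_list_of_multiset (Abs_multiset (\<lambda>x. order x (char_poly M)))"

definition lambda2 :: "(nat \<Rightarrow> nat \<Rightarrow> real) \<Rightarrow> nat set \<Rightarrow> real" where
  "lambda2 A C = sorted_eigenvalues (laplacian A C) ! 1"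

definition boundary_weight :: "nat \<Rightarrow> (nat \<Rightarrow> nat \<Rightarrow> real) \<Rightarrow> nat set \<Rightarrow> real" where
  "boundary_weight n A C = (\<Sum>i\<in>C. \<Sum>j\<in>{1..n} - C. A i j)"

end

theory Submission
  imports Defs
begin


lemma coord_cont[continuous_intros]: "continuous_on S (\<lambda>x::nat\<Rightarrow>real. x i)"
  by (rule continuous_on_subset[OF continuous_on_product_coordinates]) simp

lemma compact_box: "compact {y::nat\<Rightarrow>real. \<forall>a. y a \<in> (if a < m then {-1..1} else {0})}"
proof -
  have "{y::nat\<Rightarrow>real. \<forall>a. y a \<in> (if a < m then {-1..1} else {0})} = PiE UNIV (\<lambda>a. if a < m then {-1..1} else {0})"
    by (auto simp: PiE_def Pi_def)
  moreover have "compactin (product_topology (\<lambda>_. euclidean) UNIV) (PiE UNIV (\<lambda>a. if a < m then {-1..(1::real)} else {0}))"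
    by (subst compactin_PiE) auto
  ultimately show ?thesis by (simp add: euclidean_product_topology)
qed

lemma compact_S: "compact {y::nat\<Rightarrow>real. (\<forall>a. y a \<in> (if a < m then {-1..1} else {0})) \<and> (\<Sum>a<m. y a) = 0 \<and> (\<Sum>a<m. (y a)^2) = 1}"
proof -
  have c1: "closed {y::nat\<Rightarrow>real. (\<Sum>a<m. y a) = 0}"
    by (rule closed_Collect_eq) (auto intro!: continuous_intros)
  have c2: "closed {y::nat\<Rightarrow>real. (\<Sum>a<m. (y a)^2) = 1}"
    by (rule closed_Collect_eq) (auto intro!: continuous_intros)
  have eq: "{y::nat\<Rightarrow>real. (\<forall>a. y a \<in> (if a < m then {-1..1} else {0})) \<and> (\<Sum>a<m. y a) = 0 \<and> (\<Sum>a<m. (y a)^2) = 1}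
    = {y::nat\<Rightarrow>real. \<forall>a. y a \<in> (if a < m then {-1..1} else {0})} \<inter> ({y. (\<Sum>a<m. y a) = 0} \<inter> {y. (\<Sum>a<m. (y a)^2) = 1})"
    by auto
  show ?thesis unfolding eq
    by (rule compact_Int_closed[OF compact_box closed_Int[OF c1 c2]])
qed

definition qf :: "nat \<Rightarrow> (nat \<Rightarrow> nat \<Rightarrow> real) \<Rightarrow> (nat \<Rightarrow> real) \<Rightarrow> real" where
  "qf m B y = (\<Sum>a<m. \<Sum>b<m. B a b * (y a - y b)^2) / 2"

definition bil :: "nat \<Rightarrow> (nat \<Rightarrow> nat \<Rightarrow> real) \<Rightarrow> (nat \<Rightarrow> real) \<Rightarrow> (nat \<Rightarrow> real) \<Rightarrow> real" where
  "bil m B y z = (\<Sum>a<m. \<Sum>b<m. B a b * (y a - y b) * (z a - z b)) / 2"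

definition lv :: "nat \<Rightarrow> (nat \<Rightarrow> nat \<Rightarrow> real) \<Rightarrow> (nat \<Rightarrow> real) \<Rightarrow> nat \<Rightarrow> real" where
  "lv m B y a = (\<Sum>b<m. B a b * (y a - y b))"

lemma bil_lv:
  assumes sym: "\<forall>a b. B a b = B b a"
  shows "(\<Sum>a<m. z a * lv m B y a) = bil m B y z"
proof -
  have s1: "(\<Sum>a<m. z a * lv m B y a) = (\<Sum>a<m. \<Sum>b<m. B a b * (y a - y b) * z a)"
    by (simp add: lv_def sum_distrib_left mult_ac)
  have "(\<Sum>a<m. \<Sum>b<m. B a b * (y a - y b) * z a) = (\<Sum>b<m. \<Sum>a<m. B a b * (y a - y b) * z a)"
    by (rule sum.swap)
  also have "\<dots> = (\<Sum>a<m. \<Sum>b<m. B a b * (y a - y b) * (- z b))"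
    by (rule sum.cong[OF refl], rule sum.cong[OF refl]) (simp add: sym[rule_format, of b a for a b] algebra_simps)
  finally have s2: "(\<Sum>a<m. \<Sum>b<m. B a b * (y a - y b) * z a) = (\<Sum>a<m. \<Sum>b<m. B a b * (y a - y b) * (- z b))" .
  have "2 * (\<Sum>a<m. \<Sum>b<m. B a b * (y a - y b) * z a) = (\<Sum>a<m. \<Sum>b<m. B a b * (y a - y b) * z a) + (\<Sum>a<m. \<Sum>b<m. B a b * (y a - y b) * (- z b))"
    using s2 by simp
  also have "\<dots> = (\<Sum>a<m. \<Sum>b<m. B a b * (y a - y b) * (z a - z b))"
    by (simp add: sum.distrib[symmetric] algebra_simps)
  finally show ?thesis unfolding s1 bil_def by simp
qed

lemma qf_expand: "qf m B (\<lambda>a. y a + t * z a) = qf m B y + 2 * t * bil m B y z + t^2 * qf m B z"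
proof -
  have "\<And>a b. B a b * ((y a + t * z a) - (y b + t * z b))^2 = B a b * (y a - y b)^2 + 2 * t * (B a b * (y a - y b) * (z a - z b)) + t^2 * (B a b * (z a - z b)^2)"
    by (simp add: power2_eq_square algebra_simps)
  then show ?thesis unfolding qf_def bil_def
    by (simp add: sum.distrib sum_distrib_left add_divide_distrib)
qed

lemma qf_nonneg: assumes "\<forall>a b. B a b \<ge> 0" shows "qf m B y \<ge> 0"
  unfolding qf_def using assms by (auto intro!: sum_nonneg divide_nonneg_nonneg)

lemma quad_zero: fixes b c :: real assumes "\<forall>t. 0 \<le> 2 * t * b + t^2 * c" shows "b = 0"
proof (rule ccontr)
  assume b: "b \<noteq> 0"
  define s where "s = 1 / (\<bar>c\<bar> + 1)"
  have s: "s > 0" "s * \<bar>c\<bar> < 1" unfolding s_def by (auto simp: field_simps)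
  have "0 \<le> 2 * (- s * b) * b + (- s * b)^2 * c" using assms by blast
  also have "\<dots> = s * b^2 * (s * c - 2)" by (simp add: power2_eq_square algebra_simps)
  also have "\<dots> < 0"
  proof -
    have "s * c \<le> s * \<bar>c\<bar>" using s by (intro mult_left_mono) auto
    then have "s * c - 2 < 0" using s by linarith
    moreover have "s * b^2 > 0" using s b by auto
    ultimately show ?thesis by (simp add: mult_pos_neg)
  qed
  finally show False by simp
qed


lemma qf_cong: assumes "\<forall>a<m. y a = y' a" shows "qf m B y = qf m B y'"
  unfolding qf_def using assms by (intro arg_cong[where f="\<lambda>x. x / 2"] sum.cong refl) auto

lemma qf_scale: "qf m B (\<lambda>a. c * y a) = c^2 * qf m B y"
proof -
  have e: "\<And>a b. B a b * (c * y a - c * y b)^2 = c^2 * (B a b * (y a - y b)^2)"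
    by (simp add: power2_eq_square algebra_simps)
  show ?thesis unfolding qf_def e by (simp add: sum_distrib_left)
qed

lemma rayleigh:
  fixes B :: "nat \<Rightarrow> nat \<Rightarrow> real"
  assumes sym: "\<forall>a b. B a b = B b a" and nn: "\<forall>a b. B a b \<ge> 0" and m2: "m \<ge> 2"
  shows "\<exists>y \<mu>. (\<Sum>a<m. y a) = 0 \<and> (\<Sum>a<m. (y a)^2) = 1 \<and> (\<forall>a<m. lv m B y a = \<mu> * y a) \<and> \<mu> \<ge> 0
     \<and> (\<forall>z. (\<Sum>a<m. z a) = 0 \<longrightarrow> \<mu> * (\<Sum>a<m. (z a)^2) \<le> qf m B z)"
proof -
  define S where "S = {y::nat\<Rightarrow>real. (\<forall>a. y a \<in> (if a < m then {-1..1} else {0})) \<and> (\<Sum>a<m. y a) = 0 \<and> (\<Sum>a<m. (y a)^2) = 1}"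
  have cS: "compact S" unfolding S_def by (rule compact_S)
  define y0 :: "nat \<Rightarrow> real" where "y0 = (\<lambda>a. if a = 0 then 1 / sqrt 2 else if a = 1 then - 1 / sqrt 2 else 0)"
  have "y0 \<in> S"
  proof -
    have d: "{..<m} = {0,1} \<union> {2..<m}" using m2 by auto
    have s1: "(\<Sum>a<m. y0 a) = 0" unfolding d by (subst sum.union_disjoint) (auto simp: y0_def)
    have s2: "(\<Sum>a<m. (y0 a)^2) = 1" unfolding d by (subst sum.union_disjoint) (auto simp: y0_def power_divide)
    have "\<forall>a. y0 a \<in> (if a < m then {-1..1} else {0})"
    proof
      fix a
      have "1 / sqrt 2 \<le> (1::real)" by (simp add: divide_le_eq_1 real_sqrt_ge_one)
      moreover have "-1 \<le> 1 / sqrt (2::real)" by (rule order_trans[of _ 0]) auto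
      ultimately show "y0 a \<in> (if a < m then {-1..1} else {0})" using m2 by (auto simp: y0_def)
    qed
    then show ?thesis unfolding S_def using s1 s2 by auto
  qed
  then have Sne: "S \<noteq> {}" by auto
  have cont: "continuous_on S (qf m B)" unfolding qf_def by (intro continuous_intros) auto
  obtain y where yS: "y \<in> S" and ymin: "\<forall>u\<in>S. qf m B y \<le> qf m B u"
    using continuous_attains_inf[OF cS Sne cont] by blast
  define \<mu> where "\<mu> = qf m B y"
  have y1: "(\<Sum>a<m. y a) = 0" and y2: "(\<Sum>a<m. (y a)^2) = 1" using yS unfolding S_def by auto
  have G: "\<mu> * (\<Sum>a<m. (z a)^2) \<le> qf m B z" if zs: "(\<Sum>a<m. z a) = 0" for z
  proof (cases "(\<Sum>a<m. (z a)^2) = 0")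
    case True then show ?thesis using qf_nonneg[OF nn] by simp
  next
    case False
    define s where "s = (\<Sum>a<m. (z a)^2)"
    have spos: "s > 0" using False unfolding s_def by (metis less_eq_real_def sum_nonneg zero_le_power2)
    define r where "r = sqrt s"
    have rpos: "r > 0" and r2: "r^2 = s" using spos unfolding r_def by auto
    define u where "u = (\<lambda>a. if a < m then z a / r else 0)"
    have "u \<in> S"
    proof -
      have "\<forall>a. u a \<in> (if a < m then {-1..1} else {0})"
      proof
        fix a
        show "u a \<in> (if a < m then {-1..1} else {0})"
        proof (cases "a < m")
          case True
          have "(z a)^2 \<le> s" unfolding s_def using True
            by (intro member_le_sum) auto
          then have "(z a / r)^2 \<le> 1" using rpos r2 spos by (simp add: power_divide divide_le_eq_1)
          then have "\<bar>z a / r\<bar> \<le> 1" by (metis abs_le_square_iff abs_one one_power2)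
          then show ?thesis using True unfolding u_def by (simp add: abs_le_iff del: abs_divide)
        qed (simp add: u_def)
      qed
      moreover have "(\<Sum>a<m. u a) = 0" unfolding u_def using zs by (simp add: sum_divide_distrib[symmetric])
      moreover have "(\<Sum>a<m. (u a)^2) = 1" unfolding u_def using rpos r2 spos
        by (simp add: power_divide sum_divide_distrib[symmetric] s_def[symmetric])
      ultimately show ?thesis unfolding S_def by auto
    qed
    then have "\<mu> \<le> qf m B u" using ymin unfolding \<mu>_def by auto
    also have "qf m B u = qf m B (\<lambda>a. (1/r) * z a)" by (rule qf_cong) (auto simp: u_def)
    also have "\<dots> = qf m B z / s" unfolding qf_scale using r2 by (simp add: power_divide)
    finally show ?thesis using spos unfolding s_def[symmetric] by (simp add: pos_le_divide_eq mult.commute)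
  qed
  have L: "bil m B y z = \<mu> * (\<Sum>a<m. y a * z a)" if zs: "(\<Sum>a<m. z a) = 0" for z
  proof -
    have "\<forall>t. 0 \<le> 2 * t * (bil m B y z - \<mu> * (\<Sum>a<m. y a * z a)) + t^2 * (qf m B z - \<mu> * (\<Sum>a<m. (z a)^2))"
    proof
      fix t
      have "(\<Sum>a<m. y a + t * z a) = 0" using y1 zs by (simp add: sum.distrib sum_distrib_left[symmetric])
      from G[OF this] have "\<mu> * (\<Sum>a<m. (y a + t * z a)^2) \<le> qf m B (\<lambda>a. y a + t * z a)" .
      moreover have "(\<Sum>a<m. (y a + t * z a)^2) = (\<Sum>a<m. (y a)^2) + 2 * t * (\<Sum>a<m. y a * z a) + t^2 * (\<Sum>a<m. (z a)^2)"
        by (simp add: power2_eq_square algebra_simps sum.distrib sum_distrib_left)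
      ultimately show "0 \<le> 2 * t * (bil m B y z - \<mu> * (\<Sum>a<m. y a * z a)) + t^2 * (qf m B z - \<mu> * (\<Sum>a<m. (z a)^2))"
        unfolding qf_expand y2 \<mu>_def[symmetric] by (simp add: algebra_simps)
    qed
    from quad_zero[OF this] show ?thesis by simp
  qed
  define r where "r = (\<lambda>a. lv m B y a - \<mu> * y a)"
  have "(\<Sum>a<m. lv m B y a) = 0"
  proof -
    have "(\<Sum>a<m. lv m B y a) = (\<Sum>a<m. (\<lambda>_. 1) a * lv m B y a)" by simp
    also have "\<dots> = bil m B y (\<lambda>_. 1)" by (rule bil_lv[OF sym])
    also have "\<dots> = 0" unfolding bil_def by simp
    finally show ?thesis .
  qed
  then have rs: "(\<Sum>a<m. r a) = 0" unfolding r_def using y1 by (simp add: sum_subtractf sum_distrib_left[symmetric])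
  have "(\<Sum>a<m. r a * lv m B y a) = \<mu> * (\<Sum>a<m. y a * r a)"
    using L[OF rs] bil_lv[OF sym, where z=r and y=y and m=m] by simp
  then have "(\<Sum>a<m. r a * r a) = 0" unfolding r_def
    by (simp add: algebra_simps sum_subtractf sum_distrib_left sum.distrib)
  then have "\<forall>a\<in>{..<m}. r a * r a = 0" by (subst sum_nonneg_eq_0_iff[symmetric]) auto
  then have ev: "\<forall>a<m. lv m B y a = \<mu> * y a" unfolding r_def by auto
  have "\<mu> \<ge> 0" unfolding \<mu>_def by (rule qf_nonneg[OF nn])
  with y1 y2 ev G show ?thesis by blast
qed


definition lapm :: "nat \<Rightarrow> (nat \<Rightarrow> nat \<Rightarrow> real) \<Rightarrow> real mat" where
  "lapm m B = Matrix.mat m m (\<lambda>(a,b). if a = b then (\<Sum>c<m. B a c) else - B a b)"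

lemma lapm_carrier: "lapm m B \<in> carrier_mat m m" unfolding lapm_def by simp

lemma lapm_dim[simp]: "dim_row (lapm m B) = m" "dim_col (lapm m B) = m" unfolding lapm_def by simp_all

lemma lapm_mult:
  assumes diag: "\<forall>a. B a a = 0"
  shows "lapm m B *\<^sub>v vec m y = vec m (lv m B y)"
proof (rule eq_vecI)
  show "dim_vec (lapm m B *\<^sub>v vec m y) = dim_vec (vec m (lv m B y))" by (simp add: lapm_def)
  fix a assume "a < dim_vec (vec m (lv m B y))"
  then have a: "a < m" by simp
  have "(lapm m B *\<^sub>v vec m y) $ a = (\<Sum>b\<in>{0..<m}. lapm m B $$ (a,b) * y b)"
    using a by (simp add: lapm_def scalar_prod_def)
  also have "\<dots> = (\<Sum>b\<in>{0..<m}. (if a = b then (\<Sum>c<m. B a c) * y a else 0) - B a b * y b)"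
    using a diag by (intro sum.cong refl) (auto simp: lapm_def algebra_simps)
  also have "\<dots> = (\<Sum>c<m. B a c) * y a - (\<Sum>b<m. B a b * y b)"
    using a by (simp add: sum_subtractf atLeast0LessThan)
  also have "\<dots> = lv m B y a" unfolding lv_def by (simp add: sum_subtractf sum_distrib_right sum_distrib_left algebra_simps)
  finally show "(lapm m B *\<^sub>v vec m y) $ a = vec m (lv m B y) $ a" using a by simp
qed

lemma eig_root:
  fixes M :: "real mat"
  assumes M: "M \<in> carrier_mat n n" and ev: "M *\<^sub>v vec n y = \<mu> \<cdot>\<^sub>v vec n y" and nz: "\<exists>a<n. y a \<noteq> 0"
  shows "poly (char_poly M) \<mu> = 0"
proof -
  have "vec n y \<noteq> 0\<^sub>v n" using nz by (auto simp: vec_eq_iff)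
  then have "eigenvector M (vec n y) \<mu>" unfolding eigenvector_def using M ev by auto
  then have "eigenvalue M \<mu>" unfolding eigenvalue_def by blast
  then show ?thesis using eigenvalue_root_char_poly[OF M] by simp
qed

lemma lapm_root:
  assumes diag: "\<forall>a. B a a = 0" and ev: "\<forall>a<m. lv m B y a = \<mu> * y a" and nz: "\<exists>a<m. y a \<noteq> 0"
  shows "poly (char_poly (lapm m B)) \<mu> = 0"
proof (rule eig_root[OF lapm_carrier _ nz])
  show "lapm m B *\<^sub>v vec m y = \<mu> \<cdot>\<^sub>v vec m y" unfolding lapm_mult[where B=B, OF diag]
    using ev by (auto simp: vec_eq_iff)
qed

lemma sum_insert_index:
  fixes f :: "nat \<Rightarrow> real"
  assumes i: "i < m" and fi: "f i = 0"
  shows "(\<Sum>k<m-1. f (insert_index i k)) = (\<Sum>b<m. f b)"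
proof -
  have inj: "inj_on (insert_index i) {..<m-1}" unfolding insert_index_def inj_on_def by auto
  have img: "insert_index i ` {..<m-1} = {..<m} - {i}"
  proof
    show "insert_index i ` {..<m-1} \<subseteq> {..<m} - {i}" using i unfolding insert_index_def by auto
    show "{..<m} - {i} \<subseteq> insert_index i ` {..<m-1}"
    proof
      fix b assume b: "b \<in> {..<m} - {i}"
      then have "insert_index i (delete_index i b) = b" by (intro insert_delete_index) auto
      moreover have "delete_index i b < m - 1" using b i unfolding delete_index_def by auto
      ultimately show "b \<in> insert_index i ` {..<m-1}" by (metis image_eqI lessThan_iff)
    qed
  qed
  have "(\<Sum>k<m-1. f (insert_index i k)) = (\<Sum>b\<in>{..<m} - {i}. f b)"
    using sum.reindex[OF inj, of f] img by simp
  also have "\<dots> = (\<Sum>b<m. f b)" using fi i by (simp add: sum_diff1)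
  finally show ?thesis .
qed

lemma order_ge2:
  assumes sym: "\<forall>a b. B a b = B b a" and diag: "\<forall>a. B a a = 0" and m2: "m \<ge> 2"
    and ev: "\<forall>a<m. lv m B y a = 0" and ys: "(\<Sum>a<m. y a) = 0" and nz: "\<exists>a<m. y a \<noteq> 0"
  shows "order 0 (char_poly (lapm m B)) \<ge> 2"
proof -
  let ?L = "lapm m B"
  let ?p = "char_poly ?L"
  have deg: "degree ?p = m" and lc: "coeff ?p m = 1" using degree_monic_char_poly[OF lapm_carrier] by auto
  have p0: "?p \<noteq> 0" using lc by auto
  have pd0: "pderiv ?p \<noteq> 0" using deg m2 by (simp add: pderiv_eq_0_iff)
  have root1: "poly ?p 0 = 0"
    by (rule lapm_root[where B=B, OF diag, where y="\<lambda>_. 1"]) (use m2 in \<open>auto simp: lv_def intro!: exI[of _ 0]\<close>)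
  have root2: "poly (pderiv ?p) 0 = 0"
  proof -
    have "poly (pderiv ?p) 0 = (\<Sum>i<m. poly (char_poly (mat_delete ?L i i)) 0)"
      unfolding pderiv_char_poly[OF lapm_carrier] by (simp add: poly_sum)
    also have "\<dots> = 0"
    proof (rule sum.neutral, rule ballI)
      fix i assume "i \<in> {..<m}"
      then have i: "i < m" by simp
      define z where "z = (\<lambda>a. y i - y a)"
      have zi: "z i = 0" unfolding z_def by simp
      have lz: "lv m B z a = 0" if "a < m" for a
      proof -
        have "lv m B z a = - lv m B y a" unfolding lv_def z_def by (simp add: sum_negf[symmetric] algebra_simps)
        then show ?thesis using ev that by simp
      qed
      obtain a where a: "a < m" "z a \<noteq> 0"
      proof (rule ccontr)
        assume "\<not> thesis"
        then have "\<forall>a<m. y a = y i" using that unfolding z_def by (metis eq_iff_diff_eq_0)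
        then have "(\<Sum>a<m. y a) = of_nat m * y i" by simp
        then have "y i = 0" using ys m2 by simp
        then show False using \<open>\<forall>a<m. y a = y i\<close> nz by auto
      qed
      then have ai: "a \<noteq> i" using zi by auto
      define v where "v = (\<lambda>k. z (insert_index i k))"
      have Md: "mat_delete ?L i i \<in> carrier_mat (m-1) (m-1)" using mat_delete_carrier[OF lapm_carrier] .
      have "mat_delete ?L i i *\<^sub>v vec (m-1) v = 0 \<cdot>\<^sub>v vec (m-1) v"
      proof (rule eq_vecI)
        show "dim_vec (mat_delete ?L i i *\<^sub>v vec (m-1) v) = dim_vec (0 \<cdot>\<^sub>v vec (m-1) v)" using Md by (simp add: lapm_def)
        fix k assume "k < dim_vec (0 \<cdot>\<^sub>v vec (m-1) v)"
        then have k: "k < m - 1" by simp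
        have ik: "insert_index i k < m" using k i unfolding insert_index_def by auto
        have "(mat_delete ?L i i *\<^sub>v vec (m-1) v) $ k = (\<Sum>k'\<in>{0..<m-1}. mat_delete ?L i i $$ (k,k') * v k')"
          using k Md by (simp add: scalar_prod_def)
        also have "\<dots> = (\<Sum>k'<m-1. (\<lambda>b. ?L $$ (insert_index i k, b) * z b) (insert_index i k'))"
          using k i unfolding atLeast0LessThan
          by (intro sum.cong refl) (auto simp: mat_delete_def lapm_def v_def insert_index_def)
        also have "\<dots> = (\<Sum>b<m. ?L $$ (insert_index i k, b) * z b)"
          by (rule sum_insert_index[OF i]) (simp add: zi)
        also have "\<dots> = (?L *\<^sub>v vec m z) $ (insert_index i k)"
          using ik by (simp add: lapm_def scalar_prod_def atLeast0LessThan)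
        also have "\<dots> = lv m B z (insert_index i k)" unfolding lapm_mult[where B=B, OF diag] using ik by simp
        also have "\<dots> = 0" using lz ik by simp
        finally show "(mat_delete ?L i i *\<^sub>v vec (m-1) v) $ k = (0 \<cdot>\<^sub>v vec (m-1) v) $ k" using k by simp
      qed
      moreover have "\<exists>k<m-1. v k \<noteq> 0"
      proof -
        have "insert_index i (delete_index i a) = a" using ai by (rule insert_delete_index)
        moreover have "delete_index i a < m - 1" using a ai i unfolding delete_index_def by auto
        ultimately show ?thesis using a unfolding v_def by metis
      qed
      ultimately show "poly (char_poly (mat_delete ?L i i)) 0 = 0" by (rule eig_root[OF Md])
    qed
    finally show ?thesis .
  qed
  have "order 0 ?p = Suc (order 0 (pderiv ?p))" by (rule order_pderiv[OF p0 root1])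
  moreover have "order 0 (pderiv ?p) \<noteq> 0" using root2 pd0 order_root by blast
  ultimately show ?thesis by simp
qed


lemma sorted_second_le:
  fixes xs :: "real list"
  assumes s: "sorted xs" and sub: "{#u, v#} \<subseteq># mset xs"
  shows "xs ! 1 \<le> max u v"
proof (rule ccontr)
  assume c: "\<not> xs ! 1 \<le> max u v"
  have "u \<in> set xs" using sub by (metis insert_subset_eq_iff set_mset_mset)
  then obtain x0 rest where xs: "xs = x0 # rest" by (cases xs) auto
  have "size {#u,v#} \<le> size (mset xs)" using sub by (rule size_mset_mono)
  then have "rest \<noteq> []" unfolding xs by auto
  then obtain x1 rest' where rest: "rest = x1 # rest'" by (cases rest) auto
  have gt: "\<forall>z\<in>set rest. z > max u v"
  proof
    fix z assume "z \<in> set rest"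
    then have "x1 \<le> z" using s unfolding xs rest by auto
    then show "z > max u v" using c unfolding xs rest by auto
  qed
  then have "u \<notin> set rest" "v \<notin> set rest" by auto
  then have r0: "count (mset rest) u = 0" "count (mset rest) v = 0" by (auto simp: count_eq_zero_iff)
  have cu: "count (mset xs) u = (if x0 = u then 1 else 0)" using r0 unfolding xs by simp
  have cv: "count (mset xs) v = (if x0 = v then 1 else 0)" using r0 unfolding xs by simp
  have "count {#u,v#} u \<le> count (mset xs) u" "count {#u,v#} v \<le> count (mset xs) v"
    using mset_subset_eq_count[OF sub, of u] mset_subset_eq_count[OF sub, of v] by auto
  then show False using cu cv by (cases "u = v") (auto split: if_splits)
qed

lemma count_eigs:
  fixes p :: "real poly"
  assumes "p \<noteq> 0"
  shows "count (Abs_multiset (\<lambda>x. order x p)) x = order x p"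
proof -
  have "finite {x. 0 < order x p}"
  proof (rule finite_subset[OF _ poly_roots_finite[OF assms]])
    show "{x. 0 < order x p} \<subseteq> {x. poly p x = 0}" using order_root by auto
  qed
  then show ?thesis by (simp add: count_Abs_multiset)
qed

lemma eig_le:
  fixes M :: "real mat"
  assumes M: "M \<in> carrier_mat n n"
    and cnt: "\<forall>x. count {#u, v#} x \<le> order x (char_poly M)"
  shows "sorted_eigenvalues M ! 1 \<le> max u v"
proof -
  have p0: "char_poly M \<noteq> 0" using degree_monic_char_poly[OF M] by auto
  define N where "N = Abs_multiset (\<lambda>x. order x (char_poly M))"
  have "{#u, v#} \<subseteq># N" unfolding subseteq_mset_def N_def count_eigs[OF p0] using cnt by auto
  then have "{#u, v#} \<subseteq># mset (sorted_list_of_multiset N)" by simp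
  then show ?thesis unfolding sorted_eigenvalues_def N_def[symmetric]
    by (intro sorted_second_le) auto
qed

lemma spectral:
  fixes B :: "nat \<Rightarrow> nat \<Rightarrow> real"
  assumes sym: "\<forall>a b. B a b = B b a" and nn: "\<forall>a b. B a b \<ge> 0" and diag: "\<forall>a. B a a = 0"
    and m2: "m \<ge> 2" and ys: "(\<Sum>a<m. y a) = 0"
  shows "(sorted_eigenvalues (lapm m B) ! 1) * (\<Sum>a<m. (y a)^2) \<le> qf m B y"
proof -
  obtain x \<mu> where x1: "(\<Sum>a<m. x a) = 0" and x2: "(\<Sum>a<m. (x a)^2) = 1"
    and ev: "\<forall>a<m. lv m B x a = \<mu> * x a" and mu0: "\<mu> \<ge> 0"
    and G: "\<forall>z. (\<Sum>a<m. z a) = 0 \<longrightarrow> \<mu> * (\<Sum>a<m. (z a)^2) \<le> qf m B z"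
    using rayleigh[OF sym nn m2] by blast
  let ?p = "char_poly (lapm m B)"
  have p0: "?p \<noteq> 0" using degree_monic_char_poly[OF lapm_carrier, of m B] by auto
  have nz: "\<exists>a<m. x a \<noteq> 0"
  proof (rule ccontr)
    assume "\<not> ?thesis"
    then have "(\<Sum>a<m. (x a)^2) = 0" by simp
    then show False using x2 by simp
  qed
  have r0: "poly ?p 0 = 0"
    by (rule lapm_root[where B=B, OF diag, where y="\<lambda>_. 1"]) (use m2 in \<open>auto simp: lv_def intro!: exI[of _ 0]\<close>)
  have o0: "order 0 ?p \<ge> 1" using r0 p0 order_root by (metis less_one linorder_not_le)
  have le: "sorted_eigenvalues (lapm m B) ! 1 \<le> \<mu>"
  proof (cases "\<mu> = 0")
    case True
    have "order 0 ?p \<ge> 2" by (rule order_ge2[OF sym diag m2 _ x1 nz]) (use ev True in simp)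
    then have "\<forall>z. count {#0, 0#} z \<le> order z ?p" by auto
    from eig_le[OF lapm_carrier this] show ?thesis using True by simp
  next
    case False
    have "poly ?p \<mu> = 0" by (rule lapm_root[where B=B, OF diag ev nz])
    then have "order \<mu> ?p \<ge> 1" using p0 order_root by (metis less_one linorder_not_le)
    then have "\<forall>z. count {#0, \<mu>#} z \<le> order z ?p" using o0 False by auto
    from eig_le[OF lapm_carrier this] show ?thesis using mu0 by simp
  qed
  have "(sorted_eigenvalues (lapm m B) ! 1) * (\<Sum>a<m. (y a)^2) \<le> \<mu> * (\<Sum>a<m. (y a)^2)"
    by (rule mult_right_mono[OF le]) (simp add: sum_nonneg)
  also have "\<dots> \<le> qf m B y" using G ys by blast
  finally show ?thesis .
qed




lemma sumC:
  assumes "finite C"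
  shows "(\<Sum>i\<in>C. f i) = (\<Sum>c<card C. f (sorted_list_of_set C ! c))"
proof -
  have "bij_betw ((!) (sorted_list_of_set C)) {..<card C} C"
    by (rule bij_betw_nth) (use assms in auto)
  then show ?thesis by (simp add: sum.reindex_bij_betw)
qed

lemma norm_sq_sum: "(norm (x::real^'d))^2 = (\<Sum>k\<in>UNIV. (x$k)^2)"
  unfolding power2_norm_eq_inner inner_vec_def by (simp add: power2_eq_square)

lemma double_sum_sym:
  fixes h :: "nat \<Rightarrow> nat \<Rightarrow> real"
  assumes sym: "\<forall>i j. h i j = h j i" and dg: "\<forall>i. h i i = 0"
  shows "(\<Sum>i\<in>V. \<Sum>j\<in>V. h i j) = 2 * (\<Sum>i\<in>V. \<Sum>j\<in>V. if i < j then h i j else 0)"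
proof -
  have "h i j = (if i < j then h i j else 0) + (if j < i then h j i else 0)"
    for i j :: nat by (cases i j rule: linorder_cases) (use sym dg in auto)
  then have "(\<Sum>i\<in>V. \<Sum>j\<in>V. h i j) = (\<Sum>i\<in>V. \<Sum>j\<in>V. if i < j then h i j else 0) + (\<Sum>i\<in>V. \<Sum>j\<in>V. if j < i then h j i else 0)"
    by (simp add: sum.distrib[symmetric])
  also have "(\<Sum>i\<in>V. \<Sum>j\<in>V. if j < i then h j i else 0) = (\<Sum>i\<in>V. \<Sum>j\<in>V. if i < j then h i j else 0)"
    by (rule sum.swap)
  finally show ?thesis by simp
qed

lemma edges_sum:
  assumes g: "wgraph n A" and sym: "\<forall>i j. f i j = f j i"
  shows "(\<Sum>(i,j)\<in>edges n A. A i j * f i j) = (\<Sum>i\<in>{1..n}. \<Sum>j\<in>{1..n}. A i j * f i j) / 2"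
proof -
  have Asym: "\<forall>i j. A i j = A j i" and Ann: "\<forall>i j. A i j \<ge> 0" and Ad: "\<forall>i. A i i = 0"
    using g unfolding wgraph_def by auto
  have e: "edges n A = {x \<in> {1..n} \<times> {1..n}. fst x < snd x \<and> A (fst x) (snd x) > 0}"
    unfolding edges_def by auto
  have "(\<Sum>(i,j)\<in>edges n A. A i j * f i j) = (\<Sum>x\<in>{1..n} \<times> {1..n}. if fst x < snd x \<and> A (fst x) (snd x) > 0 then A (fst x) (snd x) * f (fst x) (snd x) else 0)"
    unfolding e by (subst sum.inter_filter) (auto intro!: sum.cong split: prod.splits)
  also have "\<dots> = (\<Sum>x\<in>{1..n} \<times> {1..n}. if fst x < snd x then A (fst x) (snd x) * f (fst x) (snd x) else 0)"
  proof (rule sum.cong[OF refl])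
    fix x :: "nat \<times> nat"
    have "A (fst x) (snd x) > 0 \<or> A (fst x) (snd x) = 0" using Ann by (metis less_eq_real_def)
    then show "(if fst x < snd x \<and> A (fst x) (snd x) > 0 then A (fst x) (snd x) * f (fst x) (snd x) else 0)
      = (if fst x < snd x then A (fst x) (snd x) * f (fst x) (snd x) else 0)" by auto
  qed
  also have "\<dots> = (\<Sum>i\<in>{1..n}. \<Sum>j\<in>{1..n}. if i < j then A i j * f i j else 0)"
    by (simp add: sum.cartesian_product split_beta)
  also have "\<dots> = (\<Sum>i\<in>{1..n}. \<Sum>j\<in>{1..n}. A i j * f i j) / 2"
    using double_sum_sym[of "\<lambda>i j. A i j * f i j" "{1..n}"] Asym sym Ad by simp
  finally show ?thesis .
qed

lemma split_sum:
  fixes h :: "nat \<Rightarrow> nat \<Rightarrow> real"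
  assumes fin: "finite V" and sub: "C \<subseteq> V" and sym: "\<forall>i j. h i j = h j i"
  shows "(\<Sum>i\<in>V. \<Sum>j\<in>V. h i j) = (\<Sum>i\<in>C. \<Sum>j\<in>C. h i j) + 2 * (\<Sum>i\<in>C. \<Sum>j\<in>V - C. h i j) + (\<Sum>i\<in>V - C. \<Sum>j\<in>V - C. h i j)"
proof -
  have fC: "finite C" using fin sub finite_subset by blast
  have sp: "\<And>f. (\<Sum>i\<in>V. f i) = (\<Sum>i\<in>C. f i) + (\<Sum>i\<in>V - C. f i)" for f :: "nat \<Rightarrow> real"
    using sum.subset_diff[OF sub fin] by (simp add: add.commute)
  have "(\<Sum>i\<in>V. \<Sum>j\<in>V. h i j) = (\<Sum>i\<in>C. \<Sum>j\<in>C. h i j) + (\<Sum>i\<in>C. \<Sum>j\<in>V - C. h i j) + ((\<Sum>i\<in>V - C. \<Sum>j\<in>C. h i j) + (\<Sum>i\<in>V - C. \<Sum>j\<in>V - C. h i j))"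
    by (simp add: sp sum.distrib)
  also have "(\<Sum>i\<in>V - C. \<Sum>j\<in>C. h i j) = (\<Sum>i\<in>C. \<Sum>j\<in>V - C. h i j)"
    by (subst sum.swap) (simp add: sym[rule_format, of _ ])
  finally show ?thesis by simp
qed

theorem theorem1:
  fixes n :: nat and A :: "nat \<Rightarrow> nat \<Rightarrow> real"
    and L :: "nat \<Rightarrow> real^'d \<Rightarrow> real" and \<alpha> :: real
    and w :: "nat \<Rightarrow> real^'d" and C :: "nat set"
    and wbar :: "real^'d" and \<epsilon> :: real and R :: real
  assumes graph: "wgraph n A"
    and loss_nonneg: "\<forall>i\<in>{1..n}. \<forall>v. L i v \<ge> 0"
    and alpha_pos: "\<alpha> > 0"
    and sol: "is_gtvmin_solution n A L \<alpha> w"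
    and C_sub: "C \<subseteq> {1..n}" and C_ne: "C \<noteq> {}"
    and eps_nonneg: "\<epsilon> \<ge> 0"
    and eps: "(\<Sum>i\<in>C. L i wbar) \<le> \<epsilon>"
    and C_card: "card C \<ge> 2"
    and lam_pos: "lambda2 A C > 0"
    and R_nonneg: "R \<ge> 0"
    and R_bound: "\<forall>i\<in>{1..n} - C. norm (w i) \<le> R"
  shows "(\<Sum>i\<in>C. (norm (w i - (1 / real (card C)) *\<^sub>R (\<Sum>i'\<in>C. w i')))\<^sup>2)
           \<le> (1 / (\<alpha> * lambda2 A C)) *
             (\<epsilon> + 2 * \<alpha> * boundary_weight n A C * ((norm wbar)\<^sup>2 + R\<^sup>2))"
proof -
  define V where "V = {1..n}"
  define Vo where "Vo = V - C"
  define m where "m = card C"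
  define e where "e = sorted_list_of_set C"
  define B where "B = (\<lambda>a b. A (e ! a) (e ! b))"
  have finV: "finite V" unfolding V_def by simp
  have finC: "finite C" using C_sub finite_subset by blast
  have CV: "C \<subseteq> V" using C_sub unfolding V_def .
  have Asym: "\<forall>i j. A i j = A j i" and Ann: "\<forall>i j. A i j \<ge> 0" and Ad: "\<forall>i. A i i = 0"
    using graph unfolding wgraph_def by auto
  have m2: "m \<ge> 2" using C_card unfolding m_def .
  have Bsym: "\<forall>a b. B a b = B b a" using Asym unfolding B_def by auto
  have Bnn: "\<forall>a b. B a b \<ge> 0" using Ann unfolding B_def by auto
  have Bd: "\<forall>a. B a a = 0" using Ad unfolding B_def by auto
  have lapeq: "laplacian A C = lapm m B"
    unfolding laplacian_def Let_def lapm_def e_def[symmetric] m_def[symmetric]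
  proof (rule eq_matI)
    fix a b assume ab: "a < dim_row (Matrix.mat m m (\<lambda>(a, b). if a = b then \<Sum>c<m. B a c else - B a b))"
      "b < dim_col (Matrix.mat m m (\<lambda>(a, b). if a = b then \<Sum>c<m. B a c else - B a b))"
    then have "a < m" "b < m" by auto
    moreover have "(\<Sum>j\<in>C. A (e ! a) j) = (\<Sum>c<m. B a c)"
      unfolding sumC[OF finC] B_def e_def m_def ..
    ultimately show "Matrix.mat m m (\<lambda>(a, b). if a = b then \<Sum>j\<in>C. A (e ! a) j else - A (e ! a) (e ! b)) $$ (a, b) =
         Matrix.mat m m (\<lambda>(a, b). if a = b then \<Sum>c<m. B a c else - B a b) $$ (a, b)"
      by (auto simp: B_def)
  qed auto
  have lam: "lambda2 A C = sorted_eigenvalues (lapm m B) ! 1"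
    unfolding lambda2_def lapeq ..
  \<comment> \<open>Part 1: comparison with a competitor\<close>
  define D where "D = (\<lambda>u::nat \<Rightarrow> real^'d. \<Sum>i\<in>V. \<Sum>j\<in>V. A i j * (norm (u i - u j))^2)"
  have obj: "gtv_obj n A L \<alpha> u = (\<Sum>i\<in>V. L i (u i)) + \<alpha> * (D u / 2)" for u
  proof -
    have "(\<Sum>(i,j)\<in>edges n A. A i j * (norm (u i - u j))^2) = D u / 2"
      unfolding D_def V_def by (rule edges_sum[OF graph]) (simp add: norm_minus_commute)
    then show ?thesis unfolding gtv_obj_def V_def by simp
  qed
  have Dsplit: "D u = (\<Sum>i\<in>C. \<Sum>j\<in>C. A i j * (norm (u i - u j))^2) + 2 * (\<Sum>i\<in>C. \<Sum>j\<in>Vo. A i j * (norm (u i - u j))^2)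
      + (\<Sum>i\<in>Vo. \<Sum>j\<in>Vo. A i j * (norm (u i - u j))^2)" for u
    unfolding D_def Vo_def by (rule split_sum[OF finV CV]) (simp add: Asym norm_minus_commute)
  have Lsplit: "(\<Sum>i\<in>V. L i (u i)) = (\<Sum>i\<in>C. L i (u i)) + (\<Sum>i\<in>Vo. L i (u i))" for u
    unfolding Vo_def using sum.subset_diff[OF CV finV] by (simp add: add.commute)
  define w' where "w' = (\<lambda>i. if i \<in> C then wbar else w i)"
  define DCC where "DCC = (\<Sum>i\<in>C. \<Sum>j\<in>C. A i j * (norm (w i - w j))^2)"
  define X where "X = (\<Sum>i\<in>C. \<Sum>j\<in>Vo. A i j * (norm (w i - w j))^2)"
  define X' where "X' = (\<Sum>i\<in>C. \<Sum>j\<in>Vo. A i j * (norm (wbar - w j))^2)"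
  define DOO where "DOO = (\<Sum>i\<in>Vo. \<Sum>j\<in>Vo. A i j * (norm (w i - w j))^2)"
  have Dw: "D w = DCC + 2 * X + DOO" unfolding Dsplit DCC_def X_def DOO_def ..
  have Dw': "D w' = 2 * X' + DOO"
  proof -
    have "(\<Sum>i\<in>C. \<Sum>j\<in>C. A i j * (norm (w' i - w' j))^2) = 0" unfolding w'_def by simp
    moreover have "(\<Sum>i\<in>C. \<Sum>j\<in>Vo. A i j * (norm (w' i - w' j))^2) = X'"
      unfolding X'_def w'_def Vo_def by (intro sum.cong refl) auto
    moreover have "(\<Sum>i\<in>Vo. \<Sum>j\<in>Vo. A i j * (norm (w' i - w' j))^2) = DOO"
      unfolding DOO_def w'_def Vo_def by (intro sum.cong refl) auto
    ultimately show ?thesis unfolding Dsplit by simp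
  qed
  have Lw': "(\<Sum>i\<in>V. L i (w' i)) = (\<Sum>i\<in>C. L i wbar) + (\<Sum>i\<in>Vo. L i (w i))"
    unfolding Lsplit w'_def Vo_def by simp
  have "gtv_obj n A L \<alpha> w \<le> gtv_obj n A L \<alpha> w'" using sol unfolding is_gtvmin_solution_def by blast
  then have cmp: "(\<Sum>i\<in>C. L i (w i)) + \<alpha> * ((DCC + 2 * X + DOO) / 2) \<le> (\<Sum>i\<in>C. L i wbar) + \<alpha> * ((2 * X' + DOO) / 2)"
    unfolding obj Dw Dw' Lw' Lsplit by simp
  have LC: "(\<Sum>i\<in>C. L i (w i)) \<ge> 0" using loss_nonneg CV unfolding V_def by (intro sum_nonneg) auto
  have X0: "X \<ge> 0" unfolding X_def using Ann by (intro sum_nonneg mult_nonneg_nonneg) auto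
  have part1: "\<alpha> * (DCC / 2) \<le> \<epsilon> + \<alpha> * X'"
  proof -
    have e1: "\<alpha> * ((DCC + 2 * X + DOO) / 2) = \<alpha> * (DCC / 2) + \<alpha> * X + \<alpha> * (DOO / 2)"
      by (simp add: algebra_simps)
    have e2: "\<alpha> * ((2 * X' + DOO) / 2) = \<alpha> * X' + \<alpha> * (DOO / 2)" by (simp add: algebra_simps)
    have "\<alpha> * X \<ge> 0" using alpha_pos X0 by simp
    then show ?thesis using cmp LC eps unfolding e1 e2 by linarith
  qed
  have X'b: "X' \<le> 2 * ((norm wbar)^2 + R^2) * boundary_weight n A C"
  proof -
    have "X' \<le> (\<Sum>i\<in>C. \<Sum>j\<in>Vo. A i j * (2 * ((norm wbar)^2 + R^2)))"
      unfolding X'_def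
    proof (intro sum_mono mult_left_mono)
      fix i j assume j: "j \<in> Vo"
      have nj: "norm (w j) \<le> R" using R_bound j unfolding Vo_def V_def by auto
      have "norm (wbar - w j) \<le> norm wbar + norm (w j)" by (rule norm_triangle_ineq4)
      then have "(norm (wbar - w j))^2 \<le> (norm wbar + norm (w j))^2" by (simp add: power_mono)
      also have "\<dots> \<le> 2 * ((norm wbar)^2 + (norm (w j))^2)"
      proof -
        have "2 * ((norm wbar)^2 + (norm (w j))^2) - (norm wbar + norm (w j))^2 = (norm wbar - norm (w j))^2"
          by (simp add: power2_eq_square algebra_simps)
        moreover have "(norm wbar - norm (w j))^2 \<ge> 0" by simp
        ultimately show ?thesis by linarith
      qed
      also have "(norm (w j))^2 \<le> R^2" using nj by (simp add: power_mono)
      then have "2 * ((norm wbar)^2 + (norm (w j))^2) \<le> 2 * ((norm wbar)^2 + R^2)" by simp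
      finally show "(norm (wbar - w j))^2 \<le> 2 * ((norm wbar)^2 + R^2)" .
    qed (use Ann in auto)
    also have "\<dots> = 2 * ((norm wbar)^2 + R^2) * boundary_weight n A C"
      unfolding boundary_weight_def Vo_def V_def by (simp add: sum_distrib_left sum_distrib_right mult_ac)
    finally show ?thesis .
  qed
  define cb where "cb = (1 / real (card C)) *\<^sub>R (\<Sum>i'\<in>C. w i')"
  define wt where "wt = (\<lambda>i. w i - cb)"
  have cardpos: "real (card C) > 0" using m2 unfolding m_def by simp
  have wt0: "(\<Sum>i\<in>C. wt i) = 0"
  proof -
    have "(\<Sum>i\<in>C. wt i) = (\<Sum>i\<in>C. w i) - real (card C) *\<^sub>R cb" unfolding wt_def by (simp add: sum_subtractf scaleR_conv_of_real)
    also have "real (card C) *\<^sub>R cb = (\<Sum>i\<in>C. w i)" unfolding cb_def using cardpos by simp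
    finally show ?thesis by simp
  qed
  define y where "y = (\<lambda>k a. wt (e ! a) $ k)"
  have sp: "sorted_eigenvalues (lapm m B) ! 1 * (\<Sum>a<m. (y k a)^2) \<le> qf m B (y k)" for k
  proof (rule spectral[OF Bsym Bnn Bd m2])
    have "(\<Sum>a<m. y k a) = (\<Sum>i\<in>C. wt i $ k)" unfolding y_def m_def e_def sumC[OF finC] ..
    also have "\<dots> = (\<Sum>i\<in>C. wt i) $ k" by simp
    finally show "(\<Sum>a<m. y k a) = 0" using wt0 by simp
  qed
  have lhs: "(\<Sum>k\<in>UNIV. \<Sum>a<m. (y k a)^2) = (\<Sum>i\<in>C. (norm (wt i))^2)"
    unfolding norm_sq_sum y_def sumC[OF finC] m_def[symmetric] e_def[symmetric] by (rule sum.swap)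
  have rhs: "(\<Sum>k\<in>UNIV. qf m B (y k)) = DCC / 2"
  proof -
    have "(\<Sum>k\<in>UNIV. qf m B (y k)) = (\<Sum>a<m. \<Sum>b<m. B a b * (\<Sum>k\<in>UNIV. (y k a - y k b)^2)) / 2"
      unfolding qf_def by (simp add: sum_divide_distrib[symmetric] sum_distrib_left) (subst sum.swap, rule sum.cong[OF refl], subst sum.swap, simp)
    also have "\<dots> = (\<Sum>a<m. \<Sum>b<m. B a b * (norm (w (e!a) - w (e!b)))^2) / 2"
      unfolding norm_sq_sum y_def wt_def by simp
    also have "\<dots> = DCC / 2" unfolding DCC_def sumC[OF finC] B_def m_def e_def ..
    finally show ?thesis .
  qed
  have part2: "lambda2 A C * (\<Sum>i\<in>C. (norm (wt i))^2) \<le> DCC / 2"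
  proof -
    have "lambda2 A C * (\<Sum>i\<in>C. (norm (wt i))^2) = (\<Sum>k\<in>UNIV. sorted_eigenvalues (lapm m B) ! 1 * (\<Sum>a<m. (y k a)^2))"
      unfolding lam lhs[symmetric] by (simp add: sum_distrib_left)
    also have "\<dots> \<le> (\<Sum>k\<in>UNIV. qf m B (y k))" by (rule sum_mono[OF sp])
    finally show ?thesis unfolding rhs .
  qed
  have "\<alpha> * (lambda2 A C * (\<Sum>i\<in>C. (norm (wt i))^2)) \<le> \<epsilon> + 2 * \<alpha> * boundary_weight n A C * ((norm wbar)^2 + R^2)"
  proof -
    have "\<alpha> * (lambda2 A C * (\<Sum>i\<in>C. (norm (wt i))^2)) \<le> \<alpha> * (DCC / 2)"
      using part2 alpha_pos by simp
    also have "\<dots> \<le> \<epsilon> + \<alpha> * X'" by (rule part1)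
    also have "\<alpha> * X' \<le> \<alpha> * (2 * ((norm wbar)^2 + R^2) * boundary_weight n A C)"
      using X'b alpha_pos by simp
    finally show ?thesis by (simp add: algebra_simps)
  qed
  then have fin: "(\<Sum>i\<in>C. (norm (wt i))^2) * (\<alpha> * lambda2 A C) \<le> \<epsilon> + 2 * \<alpha> * boundary_weight n A C * ((norm wbar)^2 + R^2)"
  proof -
    have eqq: "(\<Sum>i\<in>C. (norm (wt i))^2) * (\<alpha> * lambda2 A C) = \<alpha> * (lambda2 A C * (\<Sum>i\<in>C. (norm (wt i))^2))"
      by (simp only: mult_ac)
    show ?thesis unfolding eqq by (rule \<open>\<alpha> * (lambda2 A C * (\<Sum>i\<in>C. (norm (wt i))^2)) \<le> \<epsilon> + 2 * \<alpha> * boundary_weight n A C * ((norm wbar)^2 + R^2)\<close>)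
  qed
  have pos: "\<alpha> * lambda2 A C > 0" using alpha_pos lam_pos by simp
  have "(\<Sum>i\<in>C. (norm (wt i))^2) \<le> (\<epsilon> + 2 * \<alpha> * boundary_weight n A C * ((norm wbar)^2 + R^2)) / (\<alpha> * lambda2 A C)"
    using fin pos by (simp only: pos_le_divide_eq)
  also have "\<dots> = 1 / (\<alpha> * lambda2 A C) * (\<epsilon> + 2 * \<alpha> * boundary_weight n A C * ((norm wbar)^2 + R^2))"
    by simp
  finally show ?thesis unfolding wt_def cb_def .
qed

end
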